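(* In the Sinkhorn setting described in the context, for all integers $t\ge1$, $$H(\mu_{2t}|\mu)+H(\mu|\mu_{2t})\le\frac{2H(\pi_*|\pi_{2\lfloor t/2\rfloor})}{t}.$$
   Context: Sinkhorn setting: $(\mathsf{X},\mu)$, $(\mathsf{Y},\nu)$ are Polish probability spaces, $c:\mathsf{X}\times\mathsf{Y}\to\mathbb{R}$ is measurable, $e^{-c}\in L^1(\mu\otimes\nu)$, and $\mathcal{C}_1(\mu,\nu):=\inf_{\pi\in\Pi(\mu,\nu)}\int c\,d\pi+H(\pi|\mu\otimes\nu)$ is finite, where $\Pi(\mu,\nu)$ is the set of couplings and $H(\rho|\sigma)=\int\log\frac{d\rho}{d\sigma}d\rho$ if $\rho\ll\sigma$, $+\infty$ otherwise. $\pi_*$ is the unique minimizer; $d\pi_*=e^{\varphi_*\oplus\psi_*-c}d(\mu\otimes\nu)$ with potentials $\varphi_*,\psi_*$ (unique up to $(\varphi_*-a,\psi_*+a)$), $(\varphi\oplus\psi)(x,y)=\varphi(x)+\psi(y)$. Let $\xi=\int e^{-c}d(\mu\otimes\nu)$ and $dR=\xi^{-1}e^{-c}d(\mu\otimes\nu)$. Sinkhorn iterates: $\varphi_0:=0$, and for $t\ge0$, $\psi_t(y):=-\log\int e^{\varphi_t(x)-c(x,y)}\mu(dx)$, $\varphi_{t+1}(x):=-\log\int e^{\psi_t(y)-c(x,y)}\nu(dy)$; set $\psi_{-1}:=-\log\xi$. Define probability measures $d\pi_{2t}=e^{\varphi_t\oplus\psi_t-c}d(\mu\otimes\nu)$ and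 $d\pi_{2t-1}=e^{\varphi_t\oplus\psi_{t-1}-c}d(\mu\otimes\nu)$ for $t\ge0$ (so $\pi_{-1}=R$). Then $\pi_{2t}$ has marginals $(\mu_{2t},\nu)$ and $\pi_{2t-1}$ has marginals $(\mu,\nu_{2t-1})$, with $d\mu_{2t}/d\mu=e^{\varphi_t-\varphi_{t+1}}$ and $d\nu_{2t-1}/d\nu=e^{\psi_{t-1}-\psi_t}$. *)

theory Defs
  imports "HOL-Probability.Probability"
begin

text \<open>The value is +infinity also when the log-density is not rho-integrable (for probability
  measures only the positive part can fail to be integrable).\<close>
definition rel_ent :: "'a measure \<Rightarrow> 'a measure \<Rightarrow> ereal" where
  "rel_ent \<rho> \<sigma> =
     (if sets \<rho> = sets \<sigma> \<and> absolutely_continuous \<sigma> \<rho>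
         \<and> integrable \<rho> (\<lambda>x. ln (enn2real (RN_deriv \<sigma> \<rho> x)))
      then ereal (\<integral>x. ln (enn2real (RN_deriv \<sigma> \<rho> x)) \<partial>\<rho>)
      else \<infinity>)"

definition couplings :: "'a measure \<Rightarrow> 'b measure \<Rightarrow> ('a \<times> 'b) measure set" where
  "couplings \<mu> \<nu> = {\<pi>. prob_space \<pi> \<and> sets \<pi> = sets (\<mu> \<Otimes>\<^sub>M \<nu>)
      \<and> distr \<pi> \<mu> fst = \<mu> \<and> distr \<pi> \<nu> snd = \<nu>}"

definition cost_int :: "('a \<times> 'b) measure \<Rightarrow> ('a \<Rightarrow> 'b \<Rightarrow> real) \<Rightarrow> ereal" where
  "cost_int \<pi> c = enn2ereal (\<integral>\<^sup>+ z. ennreal (max 0 (c (fst z) (snd z))) \<partial>\<pi>)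
                 - enn2ereal (\<integral>\<^sup>+ z. ennreal (max 0 (- c (fst z) (snd z))) \<partial>\<pi>)"

definition eot_obj :: "'a measure \<Rightarrow> 'b measure \<Rightarrow> ('a \<Rightarrow> 'b \<Rightarrow> real) \<Rightarrow> ('a \<times> 'b) measure \<Rightarrow> ereal" where
  "eot_obj \<mu> \<nu> c \<pi> = cost_int \<pi> c + rel_ent \<pi> (\<mu> \<Otimes>\<^sub>M \<nu>)"

definition C1 :: "'a measure \<Rightarrow> 'b measure \<Rightarrow> ('a \<Rightarrow> 'b \<Rightarrow> real) \<Rightarrow> ereal" where
  "C1 \<mu> \<nu> c = (INF \<pi>\<in>couplings \<mu> \<nu>. eot_obj \<mu> \<nu> c \<pi>)"

definition sk_psi_of :: "'a measure \<Rightarrow> ('a \<Rightarrow> 'b \<Rightarrow> real) \<Rightarrow> ('a \<Rightarrow> real) \<Rightarrow> 'b \<Rightarrow> real" where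
  "sk_psi_of \<mu> c \<phi> y = - ln (\<integral>x. exp (\<phi> x - c x y) \<partial>\<mu>)"

primrec sk_phi :: "'a measure \<Rightarrow> 'b measure \<Rightarrow> ('a \<Rightarrow> 'b \<Rightarrow> real) \<Rightarrow> nat \<Rightarrow> 'a \<Rightarrow> real" where
  "sk_phi \<mu> \<nu> c 0 = (\<lambda>x. 0)"
| "sk_phi \<mu> \<nu> c (Suc t) =
     (\<lambda>x. - ln (\<integral>y. exp (sk_psi_of \<mu> c (sk_phi \<mu> \<nu> c t) y - c x y) \<partial>\<nu>))"

definition sk_psi :: "'a measure \<Rightarrow> 'b measure \<Rightarrow> ('a \<Rightarrow> 'b \<Rightarrow> real) \<Rightarrow> nat \<Rightarrow> 'b \<Rightarrow> real" where
  "sk_psi \<mu> \<nu> c t = sk_psi_of \<mu> c (sk_phi \<mu> \<nu> c t)"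

text \<open>pi_n for n >= 0: pi_{2t} has density exp(phi_t + psi_t - c), pi_{2t-1} (t >= 1) has
  density exp(phi_t + psi_{t-1} - c) with respect to mu x nu.\<close>
definition sk_pi :: "'a measure \<Rightarrow> 'b measure \<Rightarrow> ('a \<Rightarrow> 'b \<Rightarrow> real) \<Rightarrow> nat \<Rightarrow> ('a \<times> 'b) measure" where
  "sk_pi \<mu> \<nu> c n =
     (if even n then
        density (\<mu> \<Otimes>\<^sub>M \<nu>) (\<lambda>z. ennreal (exp (sk_phi \<mu> \<nu> c (n div 2) (fst z)
                     + sk_psi \<mu> \<nu> c (n div 2) (snd z) - c (fst z) (snd z))))
      else
        density (\<mu> \<Otimes>\<^sub>M \<nu>) (\<lambda>z. ennreal (exp (sk_phi \<mu> \<nu> c ((n + 1) div 2) (fst z)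
                     + sk_psi \<mu> \<nu> c ((n - 1) div 2) (snd z) - c (fst z) (snd z)))))"

definition sk_mu_even :: "'a measure \<Rightarrow> 'b measure \<Rightarrow> ('a \<Rightarrow> 'b \<Rightarrow> real) \<Rightarrow> nat \<Rightarrow> 'a measure" where
  "sk_mu_even \<mu> \<nu> c t = distr (sk_pi \<mu> \<nu> c (2 * t)) \<mu> fst"

end

theory Submission
  imports Defs
begin


lemma rel_ent_density:
  assumes sf: "sigma_finite_measure R" and f[measurable]: "f \<in> borel_measurable R" and nn: "\<And>x. 0 \<le> f x"
  shows "rel_ent (density R (\<lambda>x. ennreal (f x))) R =
     (if integrable (density R (\<lambda>x. ennreal (f x))) (\<lambda>x. ln (f x))
      then ereal (\<integral>x. ln (f x) \<partial>density R (\<lambda>x. ennreal (f x))) else \<infinity>)"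
proof -
  interpret sigma_finite_measure R by fact
  let ?P = "density R (\<lambda>x. ennreal (f x))"
  have ae: "AE x in R. ennreal (f x) = RN_deriv R ?P x"
    by (rule RN_deriv_unique) auto
  have aeP: "AE x in ?P. ln (enn2real (RN_deriv R ?P x)) = ln (f x)"
    using ae nn by (subst AE_density) (auto elim!: eventually_mono dest!: sym[of "ennreal _"])
  have ac: "absolutely_continuous R ?P"
    by (rule absolutely_continuousI_density) simp
  have i: "integrable ?P (\<lambda>x. ln (enn2real (RN_deriv R ?P x))) = integrable ?P (\<lambda>x. ln (f x))"
    by (rule integrable_cong_AE) (use aeP in auto)
  have j: "(\<integral>x. ln (enn2real (RN_deriv R ?P x)) \<partial>?P) = (\<integral>x. ln (f x) \<partial>?P)"
    by (rule integral_cong_AE) (use aeP in auto)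
  show ?thesis unfolding rel_ent_def using ac i j by simp
qed

lemma xlnx_bound: "0 \<le> (y::real) \<Longrightarrow> y * max 0 (- ln y) \<le> 1"
proof (cases "y = 0")
  case False
  assume y: "0 \<le> y"
  then have yp: "0 < y" using False by simp
  show ?thesis
  proof (cases "y \<le> 1")
    case True
    have "ln (1/y) \<le> 1/y - 1" using yp by (intro ln_le_minus_one) simp
    then have "- ln y \<le> 1/y - 1" using yp by (simp add: ln_div)
    then have "y * (- ln y) \<le> y * (1/y - 1)" using yp by (intro mult_left_mono) auto
    also have "\<dots> \<le> 1" using yp by (simp add: algebra_simps)
    finally show ?thesis using yp by (simp add: max_def)
  next
    case False
    then have "ln y \<ge> 0" by simp
    then show ?thesis by (simp add: max_def)
  qed
qed simp

lemma nn_integral_le_one_prob: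
  assumes "prob_space R" "\<And>x. g x \<le> (1::real)"
  shows "(\<integral>\<^sup>+x. ennreal (g x) \<partial>R) \<le> 1"
proof -
  interpret prob_space R by fact
  have "(\<integral>\<^sup>+x. ennreal (g x) \<partial>R) \<le> (\<integral>\<^sup>+x. 1 \<partial>R)"
    using assms(2) by (intro nn_integral_mono) (simp add: ennreal_leI)
  also have "\<dots> = 1" by (simp add: emeasure_space_1)
  finally show ?thesis .
qed

lemma density_neg_ln_integrable:
  assumes R: "prob_space R" and f[measurable]: "f \<in> borel_measurable R" and nn: "\<And>x. 0 \<le> f x"
  shows "integrable (density R (\<lambda>x. ennreal (f x))) (\<lambda>x. max 0 (- ln (f x)))"
proof (rule integrableI_nonneg)
  have "(\<integral>\<^sup>+x. ennreal (max 0 (- ln (f x))) \<partial>density R (\<lambda>x. ennreal (f x)))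
      = (\<integral>\<^sup>+x. ennreal (f x * max 0 (- ln (f x))) \<partial>R)"
    by (subst nn_integral_density) (auto simp: ennreal_mult nn)
  also have "\<dots> \<le> 1" using R nn xlnx_bound by (intro nn_integral_le_one_prob) auto
  finally show "(\<integral>\<^sup>+x. ennreal (max 0 (- ln (f x))) \<partial>density R (\<lambda>x. ennreal (f x))) < \<infinity>"
    by (simp add: order_le_less_trans)
qed simp_all

lemma density_inv_integrable:
  assumes R: "prob_space R" and f[measurable]: "f \<in> borel_measurable R" and nn: "\<And>x. 0 \<le> f x"
  shows "integrable (density R (\<lambda>x. ennreal (f x))) (\<lambda>x. 1 / f x)"
    and "(\<integral>x. 1 / f x \<partial>density R (\<lambda>x. ennreal (f x))) \<le> 1"
proof -
  have eq: "(\<integral>\<^sup>+x. ennreal (1 / f x) \<partial>density R (\<lambda>x. ennreal (f x)))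
      = (\<integral>\<^sup>+x. ennreal (f x * (1 / f x)) \<partial>R)"
    by (subst nn_integral_density) (auto simp del: times_divide_eq_right simp: ennreal_mult nn)
  also have "\<dots> \<le> 1" using R nn by (intro nn_integral_le_one_prob) auto
  finally have le: "(\<integral>\<^sup>+x. ennreal (1 / f x) \<partial>density R (\<lambda>x. ennreal (f x))) \<le> 1" .
  show int: "integrable (density R (\<lambda>x. ennreal (f x))) (\<lambda>x. 1 / f x)"
    by (rule integrableI_nonneg) (use le nn in \<open>simp_all add: order_le_less_trans\<close>)
  have "ennreal (\<integral>x. 1 / f x \<partial>density R (\<lambda>x. ennreal (f x)))
     = (\<integral>\<^sup>+x. ennreal (1 / f x) \<partial>density R (\<lambda>x. ennreal (f x)))"
    by (rule nn_integral_eq_integral[symmetric]) (use int nn in auto)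
  with le show "(\<integral>x. 1 / f x \<partial>density R (\<lambda>x. ennreal (f x))) \<le> 1"
    by (metis ennreal_le_1)
qed

lemma density_gibbs:
  assumes R: "prob_space R" and P: "prob_space (density R (\<lambda>x. ennreal (f x)))"
    and f[measurable]: "f \<in> borel_measurable R" and nn: "\<And>x. 0 \<le> f x"
    and int: "integrable (density R (\<lambda>x. ennreal (f x))) (\<lambda>x. ln (f x))"
  shows "0 \<le> (\<integral>x. ln (f x) \<partial>density R (\<lambda>x. ennreal (f x)))"
proof -
  let ?P = "density R (\<lambda>x. ennreal (f x))"
  interpret P: prob_space ?P by fact
  note i = density_inv_integrable[OF R f nn]
  have ae: "AE x in ?P. 0 < f x"
    by (subst AE_density) auto
  have "(\<integral>x. 1 - 1 / f x \<partial>?P) \<le> (\<integral>x. ln (f x) \<partial>?P)"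
  proof (rule integral_mono_AE)
    show "AE x in ?P. 1 - 1 / f x \<le> ln (f x)"
      using ae
    proof (rule eventually_mono)
      fix x assume "0 < f x"
      then have "ln (1 / f x) \<le> 1 / f x - 1" by (intro ln_le_minus_one) simp
      then show "1 - 1 / f x \<le> ln (f x)" using \<open>0 < f x\<close> by (simp add: ln_div)
    qed
  qed (use int i in auto)
  moreover have "(\<integral>x. 1 - 1 / f x \<partial>?P) = 1 - (\<integral>x. 1 / f x \<partial>?P)"
    using i by (subst Bochner_Integration.integral_diff) (auto simp: P.prob_space P.prob_space[unfolded space_density])
  ultimately show ?thesis using i(2) by linarith
qed

lemma rel_ent_repr:
  assumes P: "prob_space P" and R: "prob_space R" and fin: "rel_ent P R \<noteq> \<infinity>"
  obtains f where "f \<in> borel_measurable R" "\<And>x. 0 \<le> f x" "P = density R (\<lambda>x. ennreal (f x))"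
proof -
  interpret R: prob_space R by fact
  have c: "sets P = sets R" "absolutely_continuous R P"
    using fin unfolding rel_ent_def by (auto split: if_splits)
  have d: "density R (RN_deriv R P) = P" using c by (intro R.density_RN_deriv) auto
  have ae: "AE x in R. RN_deriv R P x \<noteq> \<infinity>"
    using c by (intro R.RN_deriv_finite) (auto intro: prob_space_imp_sigma_finite P)
  have "density R (\<lambda>x. ennreal (enn2real (RN_deriv R P x))) = density R (RN_deriv R P)"
    by (rule density_cong) (use ae in \<open>auto elim!: eventually_mono simp: less_top\<close>)
  with d show ?thesis
    by (intro that[of "\<lambda>x. enn2real (RN_deriv R P x)"]) auto
qed

lemma rel_ent_nonneg:
  assumes P: "prob_space P" and R: "prob_space R"
  shows "0 \<le> rel_ent P R"
proof (cases "rel_ent P R = \<infinity>")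
  case False
  then obtain f where f: "f \<in> borel_measurable R" "\<And>x. 0 \<le> f x" and Pd: "P = density R (\<lambda>x. ennreal (f x))"
    using rel_ent_repr[OF P R] by blast
  have e: "rel_ent P R = (if integrable P (\<lambda>x. ln (f x)) then ereal (\<integral>x. ln (f x) \<partial>P) else \<infinity>)"
    unfolding Pd by (rule rel_ent_density) (use R f in \<open>auto intro: prob_space_imp_sigma_finite\<close>)
  show ?thesis
  proof (cases "integrable P (\<lambda>x. ln (f x))")
    case True
    then show ?thesis unfolding e using density_gibbs[OF R _ f] P Pd by simp
  qed (simp add: e)
qed simp

lemma dpi:
  assumes P: "prob_space P"
    and X[measurable]: "X \<in> measurable P A" and Y[measurable]: "Y \<in> measurable P B"
    and g[measurable]: "g \<in> borel_measurable B" and gp: "\<And>y. 0 < g y"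
    and f[measurable]: "f \<in> borel_measurable A" and fp: "\<And>x. 0 < f x"
    and Q: "prob_space (density P (\<lambda>\<omega>. ennreal (g (Y \<omega>))))"
    and QX: "distr (density P (\<lambda>\<omega>. ennreal (g (Y \<omega>)))) A X = density (distr P A X) (\<lambda>x. ennreal (f x))"
  shows "rel_ent (density (distr P A X) (\<lambda>x. ennreal (f x))) (distr P A X)
       \<le> rel_ent (density (distr P B Y) (\<lambda>x. ennreal (g x))) (distr P B Y)"
proof -
  let ?Q = "density P (\<lambda>\<omega>. ennreal (g (Y \<omega>)))"
  let ?PX = "distr P A X" and ?PY = "distr P B Y"
  interpret P: prob_space P by fact
  interpret Q: prob_space ?Q by fact
  have PX: "prob_space ?PX" by (rule P.prob_space_distr) simp
  have PY: "prob_space ?PY" by (rule P.prob_space_distr) simp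
  have QY: "density ?PY (\<lambda>x. ennreal (g x)) = distr ?Q B Y"
    by (rule density_distr) auto
  have gnn: "\<And>x. 0 \<le> g x" using gp less_imp_le by blast
  have fnn: "\<And>x. 0 \<le> f x" using fp less_imp_le by blast
  have R: "rel_ent (density ?PY (\<lambda>x. ennreal (g x))) ?PY =
     (if integrable (density ?PY (\<lambda>x. ennreal (g x))) (\<lambda>x. ln (g x))
      then ereal (\<integral>x. ln (g x) \<partial>density ?PY (\<lambda>x. ennreal (g x))) else \<infinity>)"
    by (rule rel_ent_density) (use PY gnn in \<open>auto intro: prob_space_imp_sigma_finite\<close>)
  have L: "rel_ent (density ?PX (\<lambda>x. ennreal (f x))) ?PX =
     (if integrable (density ?PX (\<lambda>x. ennreal (f x))) (\<lambda>x. ln (f x))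
      then ereal (\<integral>x. ln (f x) \<partial>density ?PX (\<lambda>x. ennreal (f x))) else \<infinity>)"
    by (rule rel_ent_density) (use PX fnn in \<open>auto intro: prob_space_imp_sigma_finite\<close>)
  show ?thesis
  proof (cases "integrable (density ?PY (\<lambda>x. ennreal (g x))) (\<lambda>x. ln (g x))")
    case False
    then show ?thesis unfolding R by simp
  next
    case True
    have igY: "integrable ?Q (\<lambda>\<omega>. ln (g (Y \<omega>)))"
      using True unfolding QY by (subst (asm) integrable_distr_eq) auto
    have nnf: "(\<integral>\<^sup>+x. ennreal (f x) \<partial>?PX) = 1"
    proof -
      have "(\<integral>\<^sup>+x. ennreal (f x) \<partial>?PX) = emeasure (density ?PX (\<lambda>x. ennreal (f x))) (space ?PX)"
        by (subst emeasure_density) (auto intro!: nn_integral_cong split: split_indicator)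
      also have "\<dots> = emeasure (distr ?Q A X) (space (distr ?Q A X))"
        unfolding QX by simp
      also have "\<dots> = 1" using Q.prob_space_distr[of X A] prob_space.emeasure_space_1 by (metis X measurable_density_eq1)
      finally show ?thesis .
    qed
    have ifPX: "integrable ?PX f"
      by (rule integrableI_nonneg) (use nnf fnn in auto)
    have intf1: "(\<integral>x. f x \<partial>?PX) = 1"
      using nn_integral_eq_integral[OF ifPX] nnf fnn by simp
    have ifP: "integrable P (\<lambda>\<omega>. f (X \<omega>))"
      using ifPX by (subst (asm) integrable_distr_eq) auto
    have gne: "g y \<noteq> 0" for y using gp[of y] by simp
    have ratio_eq: "\<And>\<omega>. g (Y \<omega>) * (f (X \<omega>) / g (Y \<omega>)) = f (X \<omega>)"
      using gne by simp
    have irat: "integrable ?Q (\<lambda>\<omega>. f (X \<omega>) / g (Y \<omega>))"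
      using ifP by (subst integrable_density) (auto simp: gnn gne)
    have irat1: "(\<integral>\<omega>. f (X \<omega>) / g (Y \<omega>) \<partial>?Q) = 1"
      using intf1 by (subst integral_density) (auto simp: gnn gne integral_distr)
    have ineg: "integrable ?Q (\<lambda>\<omega>. max 0 (- ln (f (X \<omega>))))"
    proof -
      have "integrable (distr ?Q A X) (\<lambda>x. max 0 (- ln (f x)))"
        unfolding QX by (rule density_neg_ln_integrable) (use PX fnn in auto)
      then show ?thesis by (subst (asm) integrable_distr_eq) auto
    qed
    have pw: "ln (f (X \<omega>)) \<le> ln (g (Y \<omega>)) + f (X \<omega>) / g (Y \<omega>) - 1" for \<omega>
    proof -
      have "ln (f (X \<omega>) / g (Y \<omega>)) \<le> f (X \<omega>) / g (Y \<omega>) - 1"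
        using fp gp by (intro ln_le_minus_one) simp
      then show ?thesis using fp[of "X \<omega>"] gp[of "Y \<omega>"] by (simp add: ln_div)
    qed
    have ifQ: "integrable ?Q (\<lambda>\<omega>. ln (f (X \<omega>)))"
    proof (rule Bochner_Integration.integrable_bound)
      show "integrable ?Q (\<lambda>\<omega>. \<bar>ln (g (Y \<omega>))\<bar> + f (X \<omega>) / g (Y \<omega>) + 1 + max 0 (- ln (f (X \<omega>))))"
        using igY irat ineg by auto
      show "AE \<omega> in ?Q. norm (ln (f (X \<omega>))) \<le> norm (\<bar>ln (g (Y \<omega>))\<bar> + f (X \<omega>) / g (Y \<omega>) + 1 + max 0 (- ln (f (X \<omega>))))"
      proof (rule AE_I2)
        fix \<omega>
        have "0 \<le> f (X \<omega>) / g (Y \<omega>)" using fnn gnn by simp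
        then show "norm (ln (f (X \<omega>))) \<le> norm (\<bar>ln (g (Y \<omega>))\<bar> + f (X \<omega>) / g (Y \<omega>) + 1 + max 0 (- ln (f (X \<omega>))))"
          using pw[of \<omega>] by (simp add: abs_le_iff max_def) linarith
      qed
    qed simp
    have iL: "integrable (density ?PX (\<lambda>x. ennreal (f x))) (\<lambda>x. ln (f x))"
      unfolding QX[symmetric] using ifQ by (subst integrable_distr_eq) auto
    have "(\<integral>x. ln (f x) \<partial>density ?PX (\<lambda>x. ennreal (f x))) = (\<integral>\<omega>. ln (f (X \<omega>)) \<partial>?Q)"
      unfolding QX[symmetric] by (subst integral_distr) auto
    also have "\<dots> \<le> (\<integral>\<omega>. ln (g (Y \<omega>)) + f (X \<omega>) / g (Y \<omega>) - 1 \<partial>?Q)"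
      by (rule integral_mono) (use ifQ igY irat pw in auto)
    also have "\<dots> = (\<integral>\<omega>. ln (g (Y \<omega>)) \<partial>?Q)"
      using igY irat irat1 by (simp add: Q.prob_space Q.prob_space[unfolded space_density])
    also have "\<dots> = (\<integral>x. ln (g x) \<partial>density ?PY (\<lambda>x. ennreal (g x)))"
      unfolding QY by (subst integral_distr) auto
    finally show ?thesis unfolding L R using True iL by simp
  qed
qed

lemma telescope:
  assumes R: "prob_space R" and P: "prob_space P" and sPR: "sets P = sets R"
    and X[measurable]: "X \<in> measurable R A" and u[measurable]: "u \<in> borel_measurable A"
    and R': "prob_space (density R (\<lambda>\<omega>. ennreal (exp (u (X \<omega>)))))"
    and PX: "distr P A X = density (distr R A X) (\<lambda>x. ennreal (exp (u x)))"
  shows "rel_ent (distr P A X) (distr R A X) + rel_ent P (density R (\<lambda>\<omega>. ennreal (exp (u (X \<omega>)))))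
       \<le> rel_ent P R"
proof (cases "rel_ent P R = \<infinity>")
  case False
  let ?R' = "density R (\<lambda>\<omega>. ennreal (exp (u (X \<omega>))))"
  let ?RX = "distr R A X"
  interpret R: prob_space R by fact
  interpret P: prob_space P by fact
  have RX: "prob_space ?RX" by (rule R.prob_space_distr) simp
  have XP[measurable]: "X \<in> measurable P A" unfolding measurable_cong_sets[OF sPR refl] by simp
  obtain r where r[measurable]: "r \<in> borel_measurable R" and rnn: "\<And>x. 0 \<le> r x"
    and Pd: "P = density R (\<lambda>x. ennreal (r x))"
    using rel_ent_repr[OF P R False] by blast
  have rP[measurable]: "r \<in> borel_measurable P" unfolding measurable_cong_sets[OF sPR refl] by simp
  have e1: "rel_ent P R = (if integrable P (\<lambda>x. ln (r x)) then ereal (\<integral>x. ln (r x) \<partial>P) else \<infinity>)"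
    unfolding Pd by (rule rel_ent_density) (use R rnn in \<open>auto intro: prob_space_imp_sigma_finite\<close>)
  have iL: "integrable P (\<lambda>x. ln (r x))" and eL: "rel_ent P R = ereal (\<integral>x. ln (r x) \<partial>P)"
    using False e1 by (auto split: if_splits)
  define f' where "f' \<omega> = r \<omega> * exp (- u (X \<omega>))" for \<omega>
  have f'[measurable]: "f' \<in> borel_measurable ?R'" unfolding f'_def by simp
  have f'R: "f' \<in> borel_measurable R" unfolding f'_def by simp
  have lnf'P[measurable]: "(\<lambda>x. ln (f' x)) \<in> borel_measurable P"
    unfolding measurable_cong_sets[OF sPR refl] using f'R by simp
  have f'nn: "\<And>x. 0 \<le> f' x" unfolding f'_def using rnn by simp
  have Pd': "P = density ?R' (\<lambda>x. ennreal (f' x))"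
  proof -
    have "ennreal (exp (u (X \<omega>))) * ennreal (r \<omega> * exp (- u (X \<omega>))) = ennreal (r \<omega>)" for \<omega>
    proof -
      have "exp (u (X \<omega>)) * (r \<omega> * exp (- u (X \<omega>))) = r \<omega>"
        by (simp add: exp_minus field_simps)
      then show ?thesis using rnn[of \<omega>] by (metis ennreal_mult exp_ge_zero mult_nonneg_nonneg exp_ge_zero)
    qed
    then show ?thesis unfolding Pd f'_def by (subst density_density_eq) simp_all
  qed
  have e2: "rel_ent P ?R' = (if integrable P (\<lambda>x. ln (f' x)) then ereal (\<integral>x. ln (f' x) \<partial>P) else \<infinity>)"
    by (subst (1 2 3) Pd') (rule rel_ent_density, use R' f'nn in \<open>auto intro: prob_space_imp_sigma_finite\<close>)
  have e3: "rel_ent (distr P A X) ?RX = (if integrable (distr P A X) (\<lambda>x. ln (exp (u x)))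
        then ereal (\<integral>x. ln (exp (u x)) \<partial>distr P A X) else \<infinity>)"
    unfolding PX by (rule rel_ent_density) (use RX in \<open>auto intro: prob_space_imp_sigma_finite\<close>)
  have negu: "integrable P (\<lambda>\<omega>. max 0 (- u (X \<omega>)))"
  proof -
    have "integrable (distr P A X) (\<lambda>x. max 0 (- ln (exp (u x))))"
      unfolding PX by (rule density_neg_ln_integrable) (use RX in auto)
    then show ?thesis by (subst (asm) integrable_distr_eq) auto
  qed
  have negf: "integrable P (\<lambda>\<omega>. max 0 (- ln (f' \<omega>)))"
    by (subst Pd') (rule density_neg_ln_integrable, use R' f'nn in auto)
  have aer: "AE \<omega> in P. 0 < r \<omega>"
    unfolding Pd by (subst AE_density) auto
  have aeeq: "AE \<omega> in P. ln (f' \<omega>) = ln (r \<omega>) - u (X \<omega>)"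
    using aer by (auto elim!: eventually_mono simp: f'_def ln_mult)
  have if': "integrable P (\<lambda>x. ln (f' x))"
  proof (rule Bochner_Integration.integrable_bound)
    show "integrable P (\<lambda>\<omega>. \<bar>ln (r \<omega>)\<bar> + max 0 (- u (X \<omega>)) + max 0 (- ln (f' \<omega>)))"
      using iL negu negf by auto
    show "AE \<omega> in P. norm (ln (f' \<omega>)) \<le> norm (\<bar>ln (r \<omega>)\<bar> + max 0 (- u (X \<omega>)) + max 0 (- ln (f' \<omega>)))"
    proof (rule eventually_mono[OF aeeq])
      fix \<omega> assume "ln (f' \<omega>) = ln (r \<omega>) - u (X \<omega>)"
      then show "norm (ln (f' \<omega>)) \<le> norm (\<bar>ln (r \<omega>)\<bar> + max 0 (- u (X \<omega>)) + max 0 (- ln (f' \<omega>)))"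
        by (smt (verit) real_norm_def)
    qed
  qed (simp add: lnf'P)
  have iu: "integrable P (\<lambda>\<omega>. u (X \<omega>))"
  proof -
    have "integrable P (\<lambda>\<omega>. ln (r \<omega>) - ln (f' \<omega>))" using iL if' by auto
    then show ?thesis
      by (rule integrable_cong_AE[THEN iffD1, rotated -1]) (use aeeq in \<open>auto elim!: eventually_mono\<close>)
  qed
  have iuX: "integrable (distr P A X) (\<lambda>x. ln (exp (u x)))"
    using iu by (subst integrable_distr_eq) auto
  have "(\<integral>x. ln (r x) \<partial>P) = (\<integral>\<omega>. u (X \<omega>) + ln (f' \<omega>) \<partial>P)"
    by (rule integral_cong_AE) (use aeeq in \<open>auto elim!: eventually_mono\<close>)
  also have "\<dots> = (\<integral>\<omega>. u (X \<omega>) \<partial>P) + (\<integral>\<omega>. ln (f' \<omega>) \<partial>P)"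
    using iu if' by simp
  also have "(\<integral>\<omega>. u (X \<omega>) \<partial>P) = (\<integral>x. ln (exp (u x)) \<partial>distr P A X)"
    by (subst integral_distr) auto
  finally show ?thesis unfolding eL e2 e3 using if' iuX by simp
qed simp




lemma step:
  assumes M1: "prob_space M1" and M2: "prob_space M2"
    and k[measurable]: "(\<lambda>z. k (fst z) (snd z)) \<in> borel_measurable (M2 \<Otimes>\<^sub>M M1)"
    and kp: "\<And>y x. 0 < k y x"
    and W[measurable]: "W \<in> borel_measurable M2" and Wp: "\<And>y. 0 < W y"
    and fin: "(\<integral>\<^sup>+ y. ennreal (W y) * (\<integral>\<^sup>+ x. ennreal (k y x) \<partial>M1) \<partial>M2) < \<infinity>"
  shows "(\<lambda>y. \<integral>x. k y x \<partial>M1) \<in> borel_measurable M2"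
    and "AE y in M2. (\<integral>\<^sup>+ x. ennreal (k y x) \<partial>M1) = ennreal (exp (- (- ln (\<integral>x. k y x \<partial>M1))))"
proof -
  interpret M1: prob_space M1 by fact
  interpret M2: prob_space M2 by fact
  have k': "case_prod k \<in> borel_measurable (M2 \<Otimes>\<^sub>M M1)" using k by (simp add: case_prod_beta')
  show "(\<lambda>y. \<integral>x. k y x \<partial>M1) \<in> borel_measurable M2"
    using k' by (rule M1.borel_measurable_lebesgue_integral)
  have gm: "(\<lambda>y. ennreal (W y) * (\<integral>\<^sup>+ x. ennreal (k y x) \<partial>M1)) \<in> borel_measurable M2"
    using k' by measurable
  have "AE y in M2. ennreal (W y) * (\<integral>\<^sup>+ x. ennreal (k y x) \<partial>M1) \<noteq> \<infinity>"
    by (rule nn_integral_PInf_AE[OF gm]) (use fin in auto)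
  then show "AE y in M2. (\<integral>\<^sup>+ x. ennreal (k y x) \<partial>M1) = ennreal (exp (- (- ln (\<integral>x. k y x \<partial>M1))))"
    using AE_space[of M2]
  proof (eventually_elim)
    case (elim y)
    then have g: "(\<integral>\<^sup>+ x. ennreal (k y x) \<partial>M1) \<noteq> \<infinity>"
      using Wp[of y] by (auto simp: ennreal_mult_eq_top_iff)
    have km[measurable]: "(\<lambda>x. k y x) \<in> borel_measurable M1"
      using measurable_Pair2[OF k' elim(2)] by simp
    have i: "integrable M1 (\<lambda>x. k y x)"
      by (rule integrableI_nonneg) (use g kp in \<open>auto simp: less_top intro!: AE_I2 less_imp_le\<close>)
    have eq: "(\<integral>\<^sup>+ x. ennreal (k y x) \<partial>M1) = ennreal (\<integral>x. k y x \<partial>M1)"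
      by (rule nn_integral_eq_integral[OF i]) (use kp in \<open>auto intro!: AE_I2 less_imp_le\<close>)
    have "(\<integral>\<^sup>+ x. ennreal (k y x) \<partial>M1) \<noteq> 0"
    proof
      assume "(\<integral>\<^sup>+ x. ennreal (k y x) \<partial>M1) = 0"
      then have "AE x in M1. ennreal (k y x) = 0" by (subst (asm) nn_integral_0_iff_AE) auto
      then have "AE x in M1. False" by (rule eventually_mono) (metis ennreal_eq_0_iff kp not_le)
      then show False by simp
    qed
    then have pos: "0 < (\<integral>x. k y x \<partial>M1)" using eq
      by (metis ennreal_0 ennreal_eq_0_iff linorder_not_less)
    show ?case using eq pos by simp
  qed
qed

locale sk =
  fixes \<mu> :: "'a measure" and \<nu> :: "'b measure" and c :: "'a \<Rightarrow> 'b \<Rightarrow> real"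
  assumes mu: "prob_space \<mu>" and nu: "prob_space \<nu>"
    and cm: "(\<lambda>z. c (fst z) (snd z)) \<in> borel_measurable (\<mu> \<Otimes>\<^sub>M \<nu>)"
    and ci: "integrable (\<mu> \<Otimes>\<^sub>M \<nu>) (\<lambda>z. exp (- c (fst z) (snd z)))"
begin

sublocale pair_prob_space \<mu> \<nu>
  by (simp add: mu nu pair_prob_space.intro pair_sigma_finite.intro prob_space_imp_sigma_finite)

interpretation M1: prob_space \<mu> by (rule mu)
interpretation M2: prob_space \<nu> by (rule nu)

lemma cm1[measurable]: "(\<lambda>z. c (fst z) (snd z)) \<in> borel_measurable (\<mu> \<Otimes>\<^sub>M \<nu>)" by (rule cm)

lemma cm2[measurable]: "(\<lambda>z. c (snd z) (fst z)) \<in> borel_measurable (\<nu> \<Otimes>\<^sub>M \<mu>)"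
proof -
  have "(\<lambda>z. c (fst z) (snd z)) \<circ> (\<lambda>(x,y). (y, x)) \<in> borel_measurable (\<nu> \<Otimes>\<^sub>M \<mu>)"
    by (rule measurable_comp[OF measurable_pair_swap' cm])
  then show ?thesis by (simp add: comp_def case_prod_beta')
qed

lemma cx: "x \<in> space \<mu> \<Longrightarrow> (\<lambda>y. c x y) \<in> borel_measurable \<nu>"
  using measurable_Pair2[OF cm, of x] by simp

lemma cy: "y \<in> space \<nu> \<Longrightarrow> (\<lambda>x. c x y) \<in> borel_measurable \<mu>"
  using measurable_Pair2[OF cm2, of y] by simp

lemma marg_fst:
  assumes a[measurable]: "a \<in> borel_measurable \<mu>" and b[measurable]: "b \<in> borel_measurable \<nu>"
  shows "distr (density (\<mu> \<Otimes>\<^sub>M \<nu>) (\<lambda>z. ennreal (exp (a (fst z) + b (snd z) - c (fst z) (snd z))))) \<mu> fst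
    = density \<mu> (\<lambda>x. ennreal (exp (a x)) * (\<integral>\<^sup>+ y. ennreal (exp (b y - c x y)) \<partial>\<nu>))"
proof (rule measure_eqI)
  fix A assume "A \<in> sets (distr (density (\<mu> \<Otimes>\<^sub>M \<nu>) (\<lambda>z. ennreal (exp (a (fst z) + b (snd z) - c (fst z) (snd z))))) \<mu> fst)"
  then have A[measurable]: "A \<in> sets \<mu>" by simp
  have vim: "fst -` A \<inter> space (\<mu> \<Otimes>\<^sub>M \<nu>) = A \<times> space \<nu>"
    using sets.sets_into_space[OF A] by (auto simp: space_pair_measure)
  have "emeasure (distr (density (\<mu> \<Otimes>\<^sub>M \<nu>) (\<lambda>z. ennreal (exp (a (fst z) + b (snd z) - c (fst z) (snd z))))) \<mu> fst) A
     = (\<integral>\<^sup>+ z. ennreal (exp (a (fst z) + b (snd z) - c (fst z) (snd z))) * indicator (A \<times> space \<nu>) z \<partial>(\<mu> \<Otimes>\<^sub>M \<nu>))"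
    by (subst emeasure_distr) (auto simp: vim emeasure_density)
  also have "\<dots> = (\<integral>\<^sup>+ x. \<integral>\<^sup>+ y. ennreal (exp (a x + b y - c x y)) * indicator (A \<times> space \<nu>) (x, y) \<partial>\<nu> \<partial>\<mu>)"
    by (subst M2.nn_integral_fst[symmetric]) auto
  also have "\<dots> = (\<integral>\<^sup>+ x. ennreal (exp (a x)) * (\<integral>\<^sup>+ y. ennreal (exp (b y - c x y)) \<partial>\<nu>) * indicator A x \<partial>\<mu>)"
  proof (rule nn_integral_cong)
    fix x assume x: "x \<in> space \<mu>"
    note [measurable] = cx[OF x]
    have "(\<integral>\<^sup>+ y. ennreal (exp (a x + b y - c x y)) * indicator (A \<times> space \<nu>) (x, y) \<partial>\<nu>)
        = (\<integral>\<^sup>+ y. (ennreal (exp (a x)) * indicator A x) * ennreal (exp (b y - c x y)) \<partial>\<nu>)"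
      by (rule nn_integral_cong)
         (auto simp: indicator_def exp_add[symmetric] ennreal_mult[symmetric] algebra_simps)
    also have "\<dots> = (ennreal (exp (a x)) * indicator A x) * (\<integral>\<^sup>+ y. ennreal (exp (b y - c x y)) \<partial>\<nu>)"
      using x by (intro nn_integral_cmult) measurable
    finally show "(\<integral>\<^sup>+ y. ennreal (exp (a x + b y - c x y)) * indicator (A \<times> space \<nu>) (x, y) \<partial>\<nu>)
      = ennreal (exp (a x)) * (\<integral>\<^sup>+ y. ennreal (exp (b y - c x y)) \<partial>\<nu>) * indicator A x"
      by (simp add: ac_simps)
  qed
  also have "\<dots> = emeasure (density \<mu> (\<lambda>x. ennreal (exp (a x)) * (\<integral>\<^sup>+ y. ennreal (exp (b y - c x y)) \<partial>\<nu>))) A"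
    by (subst emeasure_density) auto
  finally show "emeasure (distr (density (\<mu> \<Otimes>\<^sub>M \<nu>) (\<lambda>z. ennreal (exp (a (fst z) + b (snd z) - c (fst z) (snd z))))) \<mu> fst) A
     = emeasure (density \<mu> (\<lambda>x. ennreal (exp (a x)) * (\<integral>\<^sup>+ y. ennreal (exp (b y - c x y)) \<partial>\<nu>))) A" .
qed simp

lemma marg_snd:
  assumes a[measurable]: "a \<in> borel_measurable \<mu>" and b[measurable]: "b \<in> borel_measurable \<nu>"
  shows "distr (density (\<mu> \<Otimes>\<^sub>M \<nu>) (\<lambda>z. ennreal (exp (a (fst z) + b (snd z) - c (fst z) (snd z))))) \<nu> snd
    = density \<nu> (\<lambda>y. ennreal (exp (b y)) * (\<integral>\<^sup>+ x. ennreal (exp (a x - c x y)) \<partial>\<mu>))"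
proof (rule measure_eqI)
  fix A assume "A \<in> sets (distr (density (\<mu> \<Otimes>\<^sub>M \<nu>) (\<lambda>z. ennreal (exp (a (fst z) + b (snd z) - c (fst z) (snd z))))) \<nu> snd)"
  then have A[measurable]: "A \<in> sets \<nu>" by simp
  have vim: "snd -` A \<inter> space (\<mu> \<Otimes>\<^sub>M \<nu>) = space \<mu> \<times> A"
    using sets.sets_into_space[OF A] by (auto simp: space_pair_measure)
  have "emeasure (distr (density (\<mu> \<Otimes>\<^sub>M \<nu>) (\<lambda>z. ennreal (exp (a (fst z) + b (snd z) - c (fst z) (snd z))))) \<nu> snd) A
     = (\<integral>\<^sup>+ z. ennreal (exp (a (fst z) + b (snd z) - c (fst z) (snd z))) * indicator (space \<mu> \<times> A) z \<partial>(\<mu> \<Otimes>\<^sub>M \<nu>))"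
    by (subst emeasure_distr) (auto simp: vim emeasure_density)
  also have "\<dots> = (\<integral>\<^sup>+ y. \<integral>\<^sup>+ x. ennreal (exp (a x + b y - c x y)) * indicator (space \<mu> \<times> A) (x, y) \<partial>\<mu> \<partial>\<nu>)"
    by (subst nn_integral_snd[symmetric]) auto
  also have "\<dots> = (\<integral>\<^sup>+ y. ennreal (exp (b y)) * (\<integral>\<^sup>+ x. ennreal (exp (a x - c x y)) \<partial>\<mu>) * indicator A y \<partial>\<nu>)"
  proof (rule nn_integral_cong)
    fix y assume y: "y \<in> space \<nu>"
    note [measurable] = cy[OF y]
    have "(\<integral>\<^sup>+ x. ennreal (exp (a x + b y - c x y)) * indicator (space \<mu> \<times> A) (x, y) \<partial>\<mu>)
        = (\<integral>\<^sup>+ x. (ennreal (exp (b y)) * indicator A y) * ennreal (exp (a x - c x y)) \<partial>\<mu>)"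
      by (rule nn_integral_cong)
         (auto simp: indicator_def exp_add[symmetric] ennreal_mult[symmetric] algebra_simps)
    also have "\<dots> = (ennreal (exp (b y)) * indicator A y) * (\<integral>\<^sup>+ x. ennreal (exp (a x - c x y)) \<partial>\<mu>)"
      using y by (intro nn_integral_cmult) measurable
    finally show "(\<integral>\<^sup>+ x. ennreal (exp (a x + b y - c x y)) * indicator (space \<mu> \<times> A) (x, y) \<partial>\<mu>)
      = ennreal (exp (b y)) * (\<integral>\<^sup>+ x. ennreal (exp (a x - c x y)) \<partial>\<mu>) * indicator A y"
      by (simp add: ac_simps)
  qed
  also have "\<dots> = emeasure (density \<nu> (\<lambda>y. ennreal (exp (b y)) * (\<integral>\<^sup>+ x. ennreal (exp (a x - c x y)) \<partial>\<mu>))) A"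
    by (subst emeasure_density) auto
  finally show "emeasure (distr (density (\<mu> \<Otimes>\<^sub>M \<nu>) (\<lambda>z. ennreal (exp (a (fst z) + b (snd z) - c (fst z) (snd z))))) \<nu> snd) A
     = emeasure (density \<nu> (\<lambda>y. ennreal (exp (b y)) * (\<integral>\<^sup>+ x. ennreal (exp (a x - c x y)) \<partial>\<mu>))) A" .
qed simp

abbreviation "\<phi> \<equiv> sk_phi \<mu> \<nu> c"
abbreviation "\<psi> \<equiv> sk_psi \<mu> \<nu> c"

lemma phi_Suc: "\<phi> (Suc t) x = - ln (\<integral>y. exp (\<psi> t y - c x y) \<partial>\<nu>)"
  by (simp add: sk_psi_def)

declare sk_phi.simps(2)[simp del]

lemma ennreal_exp_mult: "ennreal (exp a) * ennreal (exp b) = ennreal (exp (a + b))"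
  by (simp add: ennreal_mult[symmetric] exp_add)

lemma psi_eq: "\<psi> t y = - ln (\<integral>x. exp (\<phi> t x - c x y) \<partial>\<mu>)"
  by (simp add: sk_psi_def sk_psi_of_def)

definition "Jinv t \<longleftrightarrow> \<phi> t \<in> borel_measurable \<mu> \<and> (\<exists>W. W \<in> borel_measurable \<nu> \<and> (\<forall>y. 0 < W y) \<and>
   (\<integral>\<^sup>+ y. ennreal (W y) * (\<integral>\<^sup>+ x. ennreal (exp (\<phi> t x - c x y)) \<partial>\<mu>) \<partial>\<nu>) < \<infinity>)"

lemma Jinv_psi:
  assumes "Jinv t"
  shows "\<psi> t \<in> borel_measurable \<nu>"
    and "AE y in \<nu>. (\<integral>\<^sup>+ x. ennreal (exp (\<phi> t x - c x y)) \<partial>\<mu>) = ennreal (exp (- \<psi> t y))"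
proof -
  from assms obtain W where ph[measurable]: "\<phi> t \<in> borel_measurable \<mu>" and W: "W \<in> borel_measurable \<nu>" "\<forall>y. 0 < W y"
    "(\<integral>\<^sup>+ y. ennreal (W y) * (\<integral>\<^sup>+ x. ennreal (exp (\<phi> t x - c x y)) \<partial>\<mu>) \<partial>\<nu>) < \<infinity>"
    unfolding Jinv_def by blast
  have k: "(\<lambda>z. exp (\<phi> t (snd z) - c (snd z) (fst z))) \<in> borel_measurable (\<nu> \<Otimes>\<^sub>M \<mu>)" by measurable
  have kp: "\<And>y x. 0 < exp (\<phi> t x - c x y)" by simp
  note st = step[OF mu nu, of "\<lambda>y x. exp (\<phi> t x - c x y)", OF k kp W(1) W(2)[rule_format] W(3)]
  show "\<psi> t \<in> borel_measurable \<nu>"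
    using st(1) by (simp add: psi_eq[abs_def] del: sk_psi_def)
  show "AE y in \<nu>. (\<integral>\<^sup>+ x. ennreal (exp (\<phi> t x - c x y)) \<partial>\<mu>) = ennreal (exp (- \<psi> t y))"
    using st(2) by (simp add: psi_eq del: sk_psi_def)
qed

definition "pe t = density (\<mu> \<Otimes>\<^sub>M \<nu>) (\<lambda>z. ennreal (exp (\<phi> t (fst z) + \<psi> t (snd z) - c (fst z) (snd z))))"
definition "po t = density (\<mu> \<Otimes>\<^sub>M \<nu>) (\<lambda>z. ennreal (exp (\<phi> (Suc t) (fst z) + \<psi> t (snd z) - c (fst z) (snd z))))"

lemma total_mass_eq:
  assumes "Pm = density (\<mu> \<Otimes>\<^sub>M \<nu>) h"
  shows "emeasure (distr Pm \<mu> fst) (space \<mu>) = emeasure Pm (space (\<mu> \<Otimes>\<^sub>M \<nu>))"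
    and "emeasure (distr Pm \<nu> snd) (space \<nu>) = emeasure Pm (space (\<mu> \<Otimes>\<^sub>M \<nu>))"
proof -
  have "fst -` space \<mu> \<inter> space (\<mu> \<Otimes>\<^sub>M \<nu>) = space (\<mu> \<Otimes>\<^sub>M \<nu>)"
    by (auto simp: space_pair_measure)
  then show "emeasure (distr Pm \<mu> fst) (space \<mu>) = emeasure Pm (space (\<mu> \<Otimes>\<^sub>M \<nu>))"
    using assms by (subst emeasure_distr) auto
  have "snd -` space \<nu> \<inter> space (\<mu> \<Otimes>\<^sub>M \<nu>) = space (\<mu> \<Otimes>\<^sub>M \<nu>)"
    by (auto simp: space_pair_measure)
  then show "emeasure (distr Pm \<nu> snd) (space \<nu>) = emeasure Pm (space (\<mu> \<Otimes>\<^sub>M \<nu>))"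
    using assms by (subst emeasure_distr) auto
qed

lemma emeasure_density_space: "f \<in> borel_measurable M \<Longrightarrow> emeasure (density M f) (space M) = (\<integral>\<^sup>+ x. f x \<partial>M)"
  by (subst emeasure_density) (auto intro!: nn_integral_cong split: split_indicator)

lemma even_facts:
  assumes J: "Jinv t"
  shows "\<phi> (Suc t) \<in> borel_measurable \<mu>"
    and "distr (pe t) \<nu> snd = \<nu>"
    and "distr (pe t) \<mu> fst = density \<mu> (\<lambda>x. ennreal (exp (\<phi> t x - \<phi> (Suc t) x)))"
    and "prob_space (pe t)"
    and "AE x in \<mu>. (\<integral>\<^sup>+ y. ennreal (exp (\<psi> t y - c x y)) \<partial>\<nu>) = ennreal (exp (- \<phi> (Suc t) x))"
proof -
  have ph[measurable]: "\<phi> t \<in> borel_measurable \<mu>" using J unfolding Jinv_def by blast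
  note ps = Jinv_psi[OF J]
  note [measurable] = ps(1)
  have "distr (pe t) \<nu> snd = density \<nu> (\<lambda>y. ennreal (exp (\<psi> t y)) * (\<integral>\<^sup>+ x. ennreal (exp (\<phi> t x - c x y)) \<partial>\<mu>))"
    unfolding pe_def by (rule marg_snd) auto
  also have "\<dots> = density \<nu> (\<lambda>_. 1)"
    by (rule density_cong) (use ps(2) in \<open>auto elim!: eventually_mono simp: ennreal_mult[symmetric] exp_minus_inverse\<close>)
  finally show snd: "distr (pe t) \<nu> snd = \<nu>" by (simp add: density_1)
  have tot: "emeasure (pe t) (space (\<mu> \<Otimes>\<^sub>M \<nu>)) = 1"
    using total_mass_eq(2)[OF pe_def[of t]] snd M2.emeasure_space_1 by metis
  then show "prob_space (pe t)" unfolding pe_def by (intro prob_spaceI) (simp add: pe_def)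
  have fstd: "distr (pe t) \<mu> fst = density \<mu> (\<lambda>x. ennreal (exp (\<phi> t x)) * (\<integral>\<^sup>+ y. ennreal (exp (\<psi> t y - c x y)) \<partial>\<nu>))"
    unfolding pe_def by (rule marg_fst) auto
  have K: "(\<integral>\<^sup>+ x. ennreal (exp (\<phi> t x)) * (\<integral>\<^sup>+ y. ennreal (exp (\<psi> t y - c x y)) \<partial>\<nu>) \<partial>\<mu>) = 1"
    using total_mass_eq(1)[OF pe_def[of t]] tot unfolding fstd by (subst (asm) emeasure_density_space) auto
  have k: "(\<lambda>z. exp (\<psi> t (snd z) - c (fst z) (snd z))) \<in> borel_measurable (\<mu> \<Otimes>\<^sub>M \<nu>)" by measurable
  have kp: "\<And>x y. 0 < exp (\<psi> t y - c x y)" by simp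
  have fin: "(\<integral>\<^sup>+ x. ennreal (exp (\<phi> t x)) * (\<integral>\<^sup>+ y. ennreal (exp (\<psi> t y - c x y)) \<partial>\<nu>) \<partial>\<mu>) < \<infinity>"
    using K by simp
  have W: "(\<lambda>x. exp (\<phi> t x)) \<in> borel_measurable \<mu>" by measurable
  have Wp: "\<And>x. 0 < exp (\<phi> t x)" by simp
  note st = step[OF nu mu k kp W Wp fin]
  have eqS: "\<And>x. - ln (\<integral>y. exp (\<psi> t y - c x y) \<partial>\<nu>) = \<phi> (Suc t) x"
    by (simp only: phi_Suc)
  have st1: "(\<lambda>x. \<integral>y. exp (\<psi> t y - c x y) \<partial>\<nu>) \<in> borel_measurable \<mu>"
    and st2: "AE x in \<mu>. (\<integral>\<^sup>+ y. ennreal (exp (\<psi> t y - c x y)) \<partial>\<nu>) = ennreal (exp (- \<phi> (Suc t) x))"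
    using st unfolding eqS by auto
  show "AE x in \<mu>. (\<integral>\<^sup>+ y. ennreal (exp (\<psi> t y - c x y)) \<partial>\<nu>) = ennreal (exp (- \<phi> (Suc t) x))"
    by (rule st2)
  show [measurable]: "\<phi> (Suc t) \<in> borel_measurable \<mu>"
    using st1 by (simp add: phi_Suc[abs_def] del: sk_phi.simps)
  show "distr (pe t) \<mu> fst = density \<mu> (\<lambda>x. ennreal (exp (\<phi> t x - \<phi> (Suc t) x)))"
    unfolding fstd
  proof (rule density_cong)
    show "AE x in \<mu>. ennreal (exp (\<phi> t x)) * (\<integral>\<^sup>+ y. ennreal (exp (\<psi> t y - c x y)) \<partial>\<nu>) = ennreal (exp (\<phi> t x - \<phi> (Suc t) x))"
      using st2 by (rule eventually_mono) (simp add: ennreal_exp_mult)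
  qed measurable
qed

lemma odd_facts:
  assumes J: "Jinv t"
  shows "Jinv (Suc t)"
    and "distr (po t) \<mu> fst = \<mu>"
    and "distr (po t) \<nu> snd = density \<nu> (\<lambda>y. ennreal (exp (\<psi> t y - \<psi> (Suc t) y)))"
    and "prob_space (po t)"
proof -
  note ef = even_facts[OF J]
  note [measurable] = ef(1) Jinv_psi(1)[OF J]
  have "distr (po t) \<mu> fst = density \<mu> (\<lambda>x. ennreal (exp (\<phi> (Suc t) x)) * (\<integral>\<^sup>+ y. ennreal (exp (\<psi> t y - c x y)) \<partial>\<nu>))"
    unfolding po_def by (rule marg_fst) auto
  also have "\<dots> = density \<mu> (\<lambda>_. 1)"
  proof (rule density_cong)
    show "AE x in \<mu>. ennreal (exp (\<phi> (Suc t) x)) * (\<integral>\<^sup>+ y. ennreal (exp (\<psi> t y - c x y)) \<partial>\<nu>) = 1"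
      using ef(5) by (rule eventually_mono) (simp add: ennreal_exp_mult)
  qed measurable
  finally show fst: "distr (po t) \<mu> fst = \<mu>" by (simp add: density_1)
  have tot: "emeasure (po t) (space (\<mu> \<Otimes>\<^sub>M \<nu>)) = 1"
    using total_mass_eq(1)[OF po_def[of t]] fst M1.emeasure_space_1 by metis
  then show "prob_space (po t)" unfolding po_def by (intro prob_spaceI) (simp add: po_def)
  have sndd: "distr (po t) \<nu> snd = density \<nu> (\<lambda>y. ennreal (exp (\<psi> t y)) * (\<integral>\<^sup>+ x. ennreal (exp (\<phi> (Suc t) x - c x y)) \<partial>\<mu>))"
    unfolding po_def by (rule marg_snd) auto
  have K: "(\<integral>\<^sup>+ y. ennreal (exp (\<psi> t y)) * (\<integral>\<^sup>+ x. ennreal (exp (\<phi> (Suc t) x - c x y)) \<partial>\<mu>) \<partial>\<nu>) = 1"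
    using total_mass_eq(2)[OF po_def[of t]] tot unfolding sndd by (subst (asm) emeasure_density_space) auto
  show J': "Jinv (Suc t)"
    unfolding Jinv_def
  proof (intro conjI exI[of _ "\<lambda>y. exp (\<psi> t y)"])
    show "(\<integral>\<^sup>+ y. ennreal (exp (\<psi> t y)) * (\<integral>\<^sup>+ x. ennreal (exp (\<phi> (Suc t) x - c x y)) \<partial>\<mu>) \<partial>\<nu>) < \<infinity>"
      using K by simp
  qed auto
  note ps = Jinv_psi[OF J']
  note [measurable] = ps(1)
  show "distr (po t) \<nu> snd = density \<nu> (\<lambda>y. ennreal (exp (\<psi> t y - \<psi> (Suc t) y)))"
    unfolding sndd
  proof (rule density_cong)
    show "AE y in \<nu>. ennreal (exp (\<psi> t y)) * (\<integral>\<^sup>+ x. ennreal (exp (\<phi> (Suc t) x - c x y)) \<partial>\<mu>) = ennreal (exp (\<psi> t y - \<psi> (Suc t) y))"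
      using ps(2) by (rule eventually_mono) (simp add: ennreal_exp_mult)
  qed measurable
qed

lemma Jinv_0: "Jinv 0"
  unfolding Jinv_def
proof (intro conjI exI[of _ "\<lambda>y. 1"])
  have "(\<integral>\<^sup>+ y. ennreal 1 * (\<integral>\<^sup>+ x. ennreal (exp (\<phi> 0 x - c x y)) \<partial>\<mu>) \<partial>\<nu>)
      = (\<integral>\<^sup>+ z. ennreal (exp (- c (fst z) (snd z))) \<partial>(\<mu> \<Otimes>\<^sub>M \<nu>))"
    by (subst nn_integral_snd[symmetric]) auto
  also have "\<dots> < \<infinity>"
    using ci by (auto simp: integrable_iff_bounded)
  finally show "(\<integral>\<^sup>+ y. ennreal 1 * (\<integral>\<^sup>+ x. ennreal (exp (\<phi> 0 x - c x y)) \<partial>\<mu>) \<partial>\<nu>) < \<infinity>" .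
qed auto

lemma Jinv_all: "Jinv t"
  by (induction t) (auto intro: Jinv_0 odd_facts(1))

lemma phi_meas[measurable]: "\<phi> t \<in> borel_measurable \<mu>"
  using Jinv_all[of t] unfolding Jinv_def by blast

lemma psi_meas[measurable]: "\<psi> t \<in> borel_measurable \<nu>"
  using Jinv_psi(1)[OF Jinv_all] .

lemma sk_pi_even: "sk_pi \<mu> \<nu> c (2 * t) = pe t"
  unfolding sk_pi_def pe_def by simp

lemma sk_pi_odd: "sk_pi \<mu> \<nu> c (Suc (2 * t)) = po t"
  unfolding sk_pi_def po_def by simp

definition "mue t = density \<mu> (\<lambda>x. ennreal (exp (\<phi> t x - \<phi> (Suc t) x)))"
definition "nuo t = density \<nu> (\<lambda>y. ennreal (exp (\<psi> t y - \<psi> (Suc t) y)))"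

lemma pe_fst: "distr (pe t) \<mu> fst = mue t" using even_facts(3)[OF Jinv_all] unfolding mue_def .
lemma pe_snd: "distr (pe t) \<nu> snd = \<nu>" using even_facts(2)[OF Jinv_all] .
lemma po_fst: "distr (po t) \<mu> fst = \<mu>" using odd_facts(2)[OF Jinv_all] .
lemma po_snd: "distr (po t) \<nu> snd = nuo t" using odd_facts(3)[OF Jinv_all] unfolding nuo_def .
lemma pe_prob: "prob_space (pe t)" using even_facts(4)[OF Jinv_all] .
lemma po_prob: "prob_space (po t)" using odd_facts(4)[OF Jinv_all] .

lemma sk_mu_even_eq: "sk_mu_even \<mu> \<nu> c t = mue t"
  unfolding sk_mu_even_def sk_pi_even pe_fst ..

lemma dens_exp:
  assumes [measurable]: "f \<in> borel_measurable M" "g \<in> borel_measurable M" and eq: "\<And>x. f x + g x = h x"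
  shows "density (density M (\<lambda>x. ennreal (exp (f x)))) (\<lambda>x. ennreal (exp (g x))) = density M (\<lambda>x. ennreal (exp (h x)))"
  by (subst density_density_eq) (auto simp: ennreal_exp_mult eq)

lemma sets_pe: "sets (pe t) = sets (\<mu> \<Otimes>\<^sub>M \<nu>)" unfolding pe_def by simp
lemma sets_po: "sets (po t) = sets (\<mu> \<Otimes>\<^sub>M \<nu>)" unfolding po_def by simp

lemma po_from_pe: "po t = density (pe t) (\<lambda>z. ennreal (exp (\<phi> (Suc t) (fst z) - \<phi> t (fst z))))"
  unfolding pe_def po_def by (subst dens_exp) auto
lemma pe_from_po: "pe t = density (po t) (\<lambda>z. ennreal (exp (\<phi> t (fst z) - \<phi> (Suc t) (fst z))))"
  unfolding pe_def po_def by (subst dens_exp) auto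
lemma pe_Suc_from_po: "pe (Suc t) = density (po t) (\<lambda>z. ennreal (exp (\<psi> (Suc t) (snd z) - \<psi> t (snd z))))"
  unfolding pe_def po_def by (subst dens_exp) auto
lemma po_from_pe_Suc: "po t = density (pe (Suc t)) (\<lambda>z. ennreal (exp (\<psi> t (snd z) - \<psi> (Suc t) (snd z))))"
  unfolding pe_def po_def by (subst dens_exp) auto

lemma mu_from_mue: "\<mu> = density (mue t) (\<lambda>x. ennreal (exp (\<phi> (Suc t) x - \<phi> t x)))"
  unfolding mue_def by (subst dens_exp) (auto simp: density_1)
lemma nu_from_nuo: "\<nu> = density (nuo t) (\<lambda>y. ennreal (exp (\<psi> (Suc t) y - \<psi> t y)))"
  unfolding nuo_def by (subst dens_exp) (auto simp: density_1)

lemma meas_pe: "fst \<in> measurable (pe t) \<mu>" "snd \<in> measurable (pe t) \<nu>"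
  unfolding pe_def by simp_all
lemma meas_po: "fst \<in> measurable (po t) \<mu>" "snd \<in> measurable (po t) \<nu>"
  unfolding po_def by simp_all

lemma dpi1: "rel_ent (mue (Suc t)) \<mu> \<le> rel_ent \<nu> (nuo t)"
proof -
  have "rel_ent (density (distr (po t) \<mu> fst) (\<lambda>x. ennreal (exp (\<phi> (Suc t) x - \<phi> (Suc (Suc t)) x)))) (distr (po t) \<mu> fst)
     \<le> rel_ent (density (distr (po t) \<nu> snd) (\<lambda>x. ennreal (exp (\<psi> (Suc t) x - \<psi> t x)))) (distr (po t) \<nu> snd)"
  proof (rule dpi[OF po_prob meas_po(1) meas_po(2)])
    show "prob_space (density (po t) (\<lambda>\<omega>. ennreal (exp (\<psi> (Suc t) (snd \<omega>) - \<psi> t (snd \<omega>)))))"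
      using pe_prob[of "Suc t"] unfolding pe_Suc_from_po .
    show "distr (density (po t) (\<lambda>\<omega>. ennreal (exp (\<psi> (Suc t) (snd \<omega>) - \<psi> t (snd \<omega>))))) \<mu> fst =
        density (distr (po t) \<mu> fst) (\<lambda>x. ennreal (exp (\<phi> (Suc t) x - \<phi> (Suc (Suc t)) x)))"
      unfolding pe_Suc_from_po[symmetric] pe_fst po_fst mue_def ..
  qed auto
  then show ?thesis unfolding po_fst po_snd mue_def[symmetric] nu_from_nuo[symmetric] .
qed

lemma dpi2: "rel_ent \<mu> (mue (Suc t)) \<le> rel_ent (nuo t) \<nu>"
proof -
  have "rel_ent (density (distr (pe (Suc t)) \<mu> fst) (\<lambda>x. ennreal (exp (\<phi> (Suc (Suc t)) x - \<phi> (Suc t) x)))) (distr (pe (Suc t)) \<mu> fst)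
     \<le> rel_ent (density (distr (pe (Suc t)) \<nu> snd) (\<lambda>x. ennreal (exp (\<psi> t x - \<psi> (Suc t) x)))) (distr (pe (Suc t)) \<nu> snd)"
  proof (rule dpi[OF pe_prob meas_pe(1) meas_pe(2)])
    show "prob_space (density (pe (Suc t)) (\<lambda>\<omega>. ennreal (exp (\<psi> t (snd \<omega>) - \<psi> (Suc t) (snd \<omega>)))))"
      using po_prob[of t] unfolding po_from_pe_Suc .
    show "distr (density (pe (Suc t)) (\<lambda>\<omega>. ennreal (exp (\<psi> t (snd \<omega>) - \<psi> (Suc t) (snd \<omega>))))) \<mu> fst =
        density (distr (pe (Suc t)) \<mu> fst) (\<lambda>x. ennreal (exp (\<phi> (Suc (Suc t)) x - \<phi> (Suc t) x)))"
      unfolding po_from_pe_Suc[symmetric] pe_fst po_fst mu_from_mue[symmetric] ..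
  qed auto
  then show ?thesis unfolding pe_fst pe_snd mu_from_mue[symmetric] nuo_def[symmetric] .
qed

lemma dpi3: "rel_ent (nuo t) \<nu> \<le> rel_ent \<mu> (mue t)"
proof -
  have "rel_ent (density (distr (pe t) \<nu> snd) (\<lambda>x. ennreal (exp (\<psi> t x - \<psi> (Suc t) x)))) (distr (pe t) \<nu> snd)
     \<le> rel_ent (density (distr (pe t) \<mu> fst) (\<lambda>x. ennreal (exp (\<phi> (Suc t) x - \<phi> t x)))) (distr (pe t) \<mu> fst)"
  proof (rule dpi[OF pe_prob meas_pe(2) meas_pe(1)])
    show "prob_space (density (pe t) (\<lambda>\<omega>. ennreal (exp (\<phi> (Suc t) (fst \<omega>) - \<phi> t (fst \<omega>)))))"
      using po_prob[of t] unfolding po_from_pe .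
    show "distr (density (pe t) (\<lambda>\<omega>. ennreal (exp (\<phi> (Suc t) (fst \<omega>) - \<phi> t (fst \<omega>))))) \<nu> snd =
        density (distr (pe t) \<nu> snd) (\<lambda>x. ennreal (exp (\<psi> t x - \<psi> (Suc t) x)))"
      unfolding po_from_pe[symmetric] pe_snd po_snd nuo_def ..
  qed auto
  then show ?thesis unfolding pe_fst pe_snd mu_from_mue[symmetric] nuo_def[symmetric] .
qed

lemma dpi4: "rel_ent \<nu> (nuo t) \<le> rel_ent (mue t) \<mu>"
proof -
  have "rel_ent (density (distr (po t) \<nu> snd) (\<lambda>x. ennreal (exp (\<psi> (Suc t) x - \<psi> t x)))) (distr (po t) \<nu> snd)
     \<le> rel_ent (density (distr (po t) \<mu> fst) (\<lambda>x. ennreal (exp (\<phi> t x - \<phi> (Suc t) x)))) (distr (po t) \<mu> fst)"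
  proof (rule dpi[OF po_prob meas_po(2) meas_po(1)])
    show "prob_space (density (po t) (\<lambda>\<omega>. ennreal (exp (\<phi> t (fst \<omega>) - \<phi> (Suc t) (fst \<omega>)))))"
      using pe_prob[of t] unfolding pe_from_po .
    show "distr (density (po t) (\<lambda>\<omega>. ennreal (exp (\<phi> t (fst \<omega>) - \<phi> (Suc t) (fst \<omega>))))) \<nu> snd =
        density (distr (po t) \<nu> snd) (\<lambda>x. ennreal (exp (\<psi> (Suc t) x - \<psi> t x)))"
      unfolding pe_from_po[symmetric] pe_snd po_snd nu_from_nuo[symmetric] ..
  qed auto
  then show ?thesis unfolding po_fst po_snd mue_def[symmetric] nu_from_nuo[symmetric] .
qed

lemma mue_prob: "prob_space (mue t)"
  using prob_space.prob_space_distr[OF pe_prob meas_pe(1)] pe_fst by simp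
lemma nuo_prob: "prob_space (nuo t)"
  using prob_space.prob_space_distr[OF po_prob meas_po(2)] po_snd by simp

context
  fixes \<pi>s assumes P: "prob_space \<pi>s" and sP: "sets \<pi>s = sets (\<mu> \<Otimes>\<^sub>M \<nu>)"
    and Pf: "distr \<pi>s \<mu> fst = \<mu>" and Ps: "distr \<pi>s \<nu> snd = \<nu>"
begin

lemma tele_x: "rel_ent \<mu> (mue s) + rel_ent \<pi>s (po s) \<le> rel_ent \<pi>s (pe s)"
proof -
  have "rel_ent (distr \<pi>s \<mu> fst) (distr (pe s) \<mu> fst)
      + rel_ent \<pi>s (density (pe s) (\<lambda>\<omega>. ennreal (exp (\<phi> (Suc s) (fst \<omega>) - \<phi> s (fst \<omega>))))) \<le> rel_ent \<pi>s (pe s)"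
  proof (rule telescope[OF pe_prob P _ meas_pe(1)])
    show "sets \<pi>s = sets (pe s)" using sP sets_pe by simp
    show "prob_space (density (pe s) (\<lambda>\<omega>. ennreal (exp (\<phi> (Suc s) (fst \<omega>) - \<phi> s (fst \<omega>)))))"
      using po_prob[of s] unfolding po_from_pe .
    show "distr \<pi>s \<mu> fst = density (distr (pe s) \<mu> fst) (\<lambda>x. ennreal (exp (\<phi> (Suc s) x - \<phi> s x)))"
      unfolding Pf pe_fst by (rule mu_from_mue)
  qed auto
  then show ?thesis unfolding Pf pe_fst po_from_pe[symmetric] .
qed

lemma tele_y: "rel_ent \<nu> (nuo s) + rel_ent \<pi>s (pe (Suc s)) \<le> rel_ent \<pi>s (po s)"
proof -
  have "rel_ent (distr \<pi>s \<nu> snd) (distr (po s) \<nu> snd)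
      + rel_ent \<pi>s (density (po s) (\<lambda>\<omega>. ennreal (exp (\<psi> (Suc s) (snd \<omega>) - \<psi> s (snd \<omega>))))) \<le> rel_ent \<pi>s (po s)"
  proof (rule telescope[OF po_prob P _ meas_po(2)])
    show "sets \<pi>s = sets (po s)" using sP sets_po by simp
    show "prob_space (density (po s) (\<lambda>\<omega>. ennreal (exp (\<psi> (Suc s) (snd \<omega>) - \<psi> s (snd \<omega>)))))"
      using pe_prob[of "Suc s"] unfolding pe_Suc_from_po .
    show "distr \<pi>s \<nu> snd = density (distr (po s) \<nu> snd) (\<lambda>x. ennreal (exp (\<psi> (Suc s) x - \<psi> s x)))"
      unfolding Ps po_snd by (rule nu_from_nuo)
  qed auto
  then show ?thesis unfolding Ps po_snd pe_Suc_from_po[symmetric] .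
qed

lemma final:
  assumes t: "1 \<le> t"
  shows "rel_ent (mue t) \<mu> + rel_ent \<mu> (mue t) \<le> 2 * rel_ent \<pi>s (pe (t div 2)) / ereal (real t)"
proof -
  define k where "k = t div 2"
  define S where "S = rel_ent (mue t) \<mu> + rel_ent \<mu> (mue t)"
  define Dp where "Dp s = rel_ent \<pi>s (pe s)" for s
  define a where "a s = rel_ent \<mu> (mue s)" for s
  define b where "b s = rel_ent \<nu> (nuo s)" for s
  have a0: "0 \<le> a s" for s unfolding a_def by (rule rel_ent_nonneg[OF mu mue_prob])
  have b0: "0 \<le> b s" for s unfolding b_def by (rule rel_ent_nonneg[OF nu nuo_prob])
  have D0: "0 \<le> Dp s" for s unfolding Dp_def by (rule rel_ent_nonneg[OF P pe_prob])
  have Do0: "0 \<le> rel_ent \<pi>s (po s)" for s by (rule rel_ent_nonneg[OF P po_prob])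
  have S0: "0 \<le> S" unfolding S_def using rel_ent_nonneg[OF mue_prob mu, of t] rel_ent_nonneg[OF mu mue_prob, of t] by simp
  have tel: "a s + b s + Dp (Suc s) \<le> Dp s" for s
  proof -
    have "a s + b s + Dp (Suc s) = a s + (b s + Dp (Suc s))" by (simp add: add.assoc)
    also have "\<dots> \<le> a s + rel_ent \<pi>s (po s)"
      using tele_y[of s] unfolding b_def Dp_def by (rule add_left_mono)
    also have "\<dots> \<le> Dp s" using tele_x[of s] unfolding a_def Dp_def .
    finally show ?thesis .
  qed
  have amono: "a (Suc r) \<le> a r" for r
    using dpi2[of r] dpi3[of r] unfolding a_def by (rule order_trans)
  have ebb: "rel_ent (mue (Suc r)) \<mu> \<le> b r" for r using dpi1[of r] unfolding b_def .
  have bee: "b r \<le> rel_ent (mue r) \<mu>" for r using dpi4[of r] unfolding b_def .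
  have eb: "s < t' \<Longrightarrow> rel_ent (mue t') \<mu> \<le> b s" for s t'
  proof (induction t' arbitrary: s)
    case (Suc r)
    show ?case
    proof (cases "s = r")
      case True then show ?thesis using ebb by simp
    next
      case False
      then have "s < r" using Suc.prems by simp
      then show ?thesis using ebb[of r] bee[of r] Suc.IH[of s] by (meson order_trans)
    qed
  qed simp
  have Sle: "s < t \<Longrightarrow> S \<le> a s + b s" for s
  proof -
    assume st: "s < t"
    have "rel_ent \<mu> (mue t) \<le> a s" unfolding a_def[symmetric]
      using lift_Suc_antimono_le[of a, OF amono] st by simp
    then show ?thesis unfolding S_def using eb[OF st] by (simp add: add.commute add_mono)
  qed
  have kt: "k < t" unfolding k_def using t by simp
  show ?thesis
  proof (cases "Dp k = \<infinity>")
    case True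
    then show ?thesis using t unfolding S_def[symmetric] Dp_def k_def by (simp add: ereal_divide_eq)
  next
    case False
    have "S \<le> a k + b k" using Sle[OF kt] .
    also have "\<dots> \<le> a k + b k + Dp (Suc k)" using D0 by (simp add: add_increasing2)
    also have "\<dots> \<le> Dp k" by (rule tel)
    finally have SD: "S \<le> Dp k" .
    obtain d where d: "Dp k = ereal d" using False D0[of k] by (cases "Dp k") auto
    obtain sr where sr: "S = ereal sr" using SD d S0 by (cases S) auto
    have sr0: "0 \<le> sr" using S0 sr by simp
    have ind: "k + n \<le> t \<Longrightarrow> ereal (real n * sr) + Dp (k + n) \<le> Dp k" for n
    proof (induction n)
      case 0 then show ?case by simp
    next
      case (Suc n)
      then have lt: "k + n < t" by simp
      have "ereal (real (Suc n) * sr) + Dp (k + Suc n) = ereal (real n * sr) + (S + Dp (Suc (k + n)))"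
      proof -
        have "ereal (real (Suc n) * sr) = ereal (real n * sr) + S" by (simp add: sr algebra_simps)
        then show ?thesis by (simp add: add.assoc)
      qed
      also have "\<dots> \<le> ereal (real n * sr) + (a (k + n) + b (k + n) + Dp (Suc (k + n)))"
        using Sle[OF lt] by (intro add_left_mono add_right_mono)
      also have "\<dots> \<le> ereal (real n * sr) + Dp (k + n)"
        using tel by (intro add_left_mono)
      also have "\<dots> \<le> Dp k" using Suc lt by simp
      finally show ?case .
    qed
    have "ereal (real (t - k) * sr) \<le> ereal (real (t - k) * sr) + Dp t"
      using D0 by (simp add: add_increasing2)
    also have "\<dots> \<le> Dp k" using ind[of "t - k"] kt by simp
    finally have r: "real (t - k) * sr \<le> d" using d by simp
    have tk: "real t \<le> 2 * real (t - k)" unfolding k_def by linarith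
    have "real t * sr \<le> 2 * real (t - k) * sr" using tk sr0 by (intro mult_right_mono) auto
    also have "\<dots> \<le> 2 * d" using r by simp
    finally have "sr \<le> 2 * d / real t" using t by (simp add: pos_le_divide_eq algebra_simps)
    then show ?thesis using t unfolding S_def[symmetric] Dp_def[symmetric] k_def[symmetric] d sr
      by (simp add: ereal_divide_eq)
  qed
qed

end

end


theorem proposition4p3:
  fixes \<mu> :: "'a::polish_space measure" and \<nu> :: "'b::polish_space measure"
    and c :: "'a \<Rightarrow> 'b \<Rightarrow> real" and \<pi>s :: "('a \<times> 'b) measure" and t :: nat
  assumes "prob_space \<mu>" and "sets \<mu> = sets borel"
    and "prob_space \<nu>" and "sets \<nu> = sets borel"
    and "(\<lambda>z. c (fst z) (snd z)) \<in> borel_measurable (\<mu> \<Otimes>\<^sub>M \<nu>)"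
    and "integrable (\<mu> \<Otimes>\<^sub>M \<nu>) (\<lambda>z. exp (- c (fst z) (snd z)))"
    and "\<bar>C1 \<mu> \<nu> c\<bar> \<noteq> \<infinity>"
    and "\<pi>s \<in> couplings \<mu> \<nu>" and "eot_obj \<mu> \<nu> c \<pi>s = C1 \<mu> \<nu> c"
    and "t \<ge> 1"
  shows "rel_ent (sk_mu_even \<mu> \<nu> c t) \<mu> + rel_ent \<mu> (sk_mu_even \<mu> \<nu> c t)
           \<le> 2 * rel_ent \<pi>s (sk_pi \<mu> \<nu> c (2 * (t div 2))) / ereal (real t)"
proof -
  interpret sk \<mu> \<nu> c
    unfolding sk_def using assms(1,3,5,6) by blast
  have cpl: "prob_space \<pi>s" "sets \<pi>s = sets (\<mu> \<Otimes>\<^sub>M \<nu>)" "distr \<pi>s \<mu> fst = \<mu>" "distr \<pi>s \<nu> snd = \<nu>"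
    using assms(8) unfolding couplings_def by auto
  have "rel_ent (mue t) \<mu> + rel_ent \<mu> (mue t) \<le> 2 * rel_ent \<pi>s (pe (t div 2)) / ereal (real t)"
    by (rule final[OF cpl assms(10)])
  then show ?thesis unfolding sk_mu_even_eq sk_pi_even .
qed

end
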